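(* Let $\eta\in(0,1)$ be a constant. For any integers $k,d,s$ satisfying $s=k^{1-\eta}$ and $k\ge\log d+o(k)+O_\eta(1)$ (in particular, $k\ge 2^{2/\eta}$), every $(k,d,s)$-CNF formula is $\theta$-resilient for some $\theta>0$ depending only on $k$ and $\eta$.
   Context: $\log$ denotes $\log_2$. A $(k,d,s)$-CNF formula $\Phi=(V,\mathcal C)$ is a CNF formula in which every clause contains exactly $k$ distinct variables, every variable appears in at most $d$ clauses, and any two distinct clauses share at most $s$ variables. For a clause $c$ on a set $\mathrm{vbl}(c)$ of $k$ distinct variables, its forbidden assignment is the unique assignment of $\mathrm{vbl}(c)$ violating $c$. $\mu_\Phi$ is the uniform distribution over satisfying assignments of $\Phi$. $\Phi$ is $\theta$-resilient if for every clause $c^*\notin\mathcal C$ on $k$ distinct variables with forbidden assignment $\sigma^*$, $\Pr_{X\sim\mu_\Phi}[X_{\mathrm{vbl}(c^* )}=\sigma^*]$ is either $0$ or at least $\theta$. (The paper writes this conclusion as "$O_{k,\eta}(1)$-resilient".) *)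

theory Defs
  imports Complex_Main "HOL-Library.Landau_Symbols" "HOL-Library.FuncSet"
begin

text \<open>A clause is a finite set of literals; a literal (x,b) is satisfied by
  an assignment sigma iff sigma x = b.\<close>
type_synonym 'v clause = "('v \<times> bool) set"

definition vbl :: "'v clause \<Rightarrow> 'v set" where
  "vbl c = fst ` c"

text \<open>A clause on exactly k distinct variables (no repeated / complementary literals).\<close>
definition is_clause :: "nat \<Rightarrow> 'v clause \<Rightarrow> bool" where
  "is_clause k c \<longleftrightarrow> finite c \<and> card c = k \<and> card (vbl c) = k"

definition satisfies :: "('v \<Rightarrow> bool) \<Rightarrow> 'v clause \<Rightarrow> bool" where
  "satisfies \<sigma> c \<longleftrightarrow> (\<exists>(x,b)\<in>c. \<sigma> x = b)"

definition hits_forbidden :: "('v \<Rightarrow> bool) \<Rightarrow> 'v clause \<Rightarrow> bool" where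
  "hits_forbidden \<sigma> c \<longleftrightarrow> (\<forall>(x,b)\<in>c. \<sigma> x \<noteq> b)"

definition kds_CNF :: "nat \<Rightarrow> nat \<Rightarrow> nat \<Rightarrow> 'v set \<Rightarrow> 'v clause set \<Rightarrow> bool" where
  "kds_CNF k d s V C \<longleftrightarrow>
     finite V \<and> finite C \<and>
     (\<forall>c\<in>C. is_clause k c \<and> vbl c \<subseteq> V) \<and>
     (\<forall>x\<in>V. card {c\<in>C. x \<in> vbl c} \<le> d) \<and>
     (\<forall>c1\<in>C. \<forall>c2\<in>C. c1 \<noteq> c2 \<longrightarrow> card (vbl c1 \<inter> vbl c2) \<le> s)"

definition assignments :: "'v set \<Rightarrow> ('v \<Rightarrow> bool) set" where
  "assignments V = (V \<rightarrow>\<^sub>E (UNIV :: bool set))"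

definition sat_assignments :: "'v set \<Rightarrow> 'v clause set \<Rightarrow> ('v \<Rightarrow> bool) set" where
  "sat_assignments V C = {\<sigma> \<in> assignments V. \<forall>c\<in>C. satisfies \<sigma> c}"

definition prob_forbidden :: "'v set \<Rightarrow> 'v clause set \<Rightarrow> 'v clause \<Rightarrow> real" where
  "prob_forbidden V C c =
     real (card {\<sigma> \<in> sat_assignments V C. hits_forbidden \<sigma> c}) / real (card (sat_assignments V C))"

definition resilient :: "real \<Rightarrow> nat \<Rightarrow> 'v set \<Rightarrow> 'v clause set \<Rightarrow> bool" where
  "resilient \<theta> k V C \<longleftrightarrow>
     (\<forall>c. is_clause k c \<and> vbl c \<subseteq> V \<and> c \<notin> C \<longrightarrow>
        prob_forbidden V C c = 0 \<or> prob_forbidden V C c \<ge> \<theta>)"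

end

theory Submission
  imports Defs "HOL-Real_Asymp.Real_Asymp"
begin


definition indep :: "(('v \<Rightarrow> bool) \<Rightarrow> bool) \<Rightarrow> 'v set \<Rightarrow> bool" where
  "indep P R \<longleftrightarrow> (\<forall>\<sigma> \<sigma>'. (\<forall>x. x \<notin> R \<longrightarrow> \<sigma> x = \<sigma>' x) \<longrightarrow> P \<sigma> = P \<sigma>')"

definition forb :: "('v \<times> bool) set \<Rightarrow> ('v \<Rightarrow> bool) \<Rightarrow> bool" where
  "forb L \<sigma> \<longleftrightarrow> (\<forall>(x,b)\<in>L. \<sigma> x \<noteq> b)"

lemma indep_mono: "indep P R \<Longrightarrow> R' \<subseteq> R \<Longrightarrow> indep P R'"
  unfolding indep_def by blast

lemma flip_card:
  assumes "v \<in> V" "indep H {v}"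
  shows "card {\<sigma> \<in> assignments V. H \<sigma> \<and> \<sigma> v = b} = card {\<sigma> \<in> assignments V. H \<sigma> \<and> \<sigma> v = (\<not> b)}"
proof -
  define g where "g = (\<lambda>\<sigma>::'a \<Rightarrow> bool. \<sigma>(v := \<not> \<sigma> v))"
  have gg: "g (g \<sigma>) = \<sigma>" for \<sigma> unfolding g_def by auto
  have inj: "inj g" by (metis gg injI)
  have gA: "\<sigma> \<in> assignments V \<Longrightarrow> g \<sigma> \<in> assignments V" for \<sigma>
    using assms(1) unfolding assignments_def g_def PiE_def extensional_def by auto
  have gv: "g \<sigma> v = (\<not> \<sigma> v)" for \<sigma> unfolding g_def by simp
  have gH: "H (g \<sigma>) = H \<sigma>" for \<sigma>
  proof -
    have "\<forall>x. x \<notin> {v} \<longrightarrow> g \<sigma> x = \<sigma> x" by (simp add: g_def)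
    then show ?thesis using assms(2) unfolding indep_def by blast
  qed
  let ?A = "{\<sigma> \<in> assignments V. H \<sigma> \<and> \<sigma> v = b}"
  let ?B = "{\<sigma> \<in> assignments V. H \<sigma> \<and> \<sigma> v = (\<not> b)}"
  have "g ` ?A = ?B"
  proof (rule set_eqI, rule iffI)
    fix \<sigma> assume "\<sigma> \<in> g ` ?A"
    then obtain \<tau> where "\<tau> \<in> ?A" "\<sigma> = g \<tau>" by blast
    then show "\<sigma> \<in> ?B" using gA[of \<tau>] gH[of \<tau>] gv[of \<tau>] by simp
  next
    fix \<sigma> assume a: "\<sigma> \<in> ?B"
    have "g \<sigma> \<in> ?A" using a gA[of \<sigma>] gH[of \<sigma>] gv[of \<sigma>] by simp
    moreover have "\<sigma> = g (g \<sigma>)" by (simp add: gg)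
    ultimately show "\<sigma> \<in> g ` ?A" by blast
  qed
  moreover have "card (g ` ?A) = card ?A" by (rule card_image) (use inj in \<open>simp add: inj_on_def inj_def\<close>)
  ultimately show ?thesis by simp
qed

lemma finite_assignments: "finite V \<Longrightarrow> finite (assignments V)"
  unfolding assignments_def by (simp add: finite_PiE)

lemma indep_card:
  assumes "finite V" "finite L" "inj_on fst L" "fst ` L \<subseteq> V" "indep H (fst ` L)"
  shows "card {\<sigma> \<in> assignments V. H \<sigma> \<and> forb L \<sigma>} * 2 ^ card L = card {\<sigma> \<in> assignments V. H \<sigma>}"
  using assms(2-5)
proof (induction L arbitrary: H rule: finite_induct)
  case empty
  then show ?case by (simp add: forb_def)
next
  case (insert l L)
  obtain v b where l: "l = (v,b)" by force
  have vL: "v \<notin> fst ` L"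
  proof
    assume "v \<in> fst ` L"
    then obtain b' where "(v,b') \<in> L" by force
    then show False using insert.prems(1) insert.hyps(2) l unfolding inj_on_def by force
  qed
  have vV: "v \<in> V" using insert.prems(2) l by auto
  have forbI: "forb (insert l L) \<sigma> = (forb L \<sigma> \<and> \<sigma> v = (\<not> b))" for \<sigma>
    unfolding forb_def l by auto
  define H' where "H' = (\<lambda>\<sigma>. H \<sigma> \<and> forb L \<sigma>)"
  have indH': "indep H' {v}"
  proof -
    have "indep (forb L) {v}" unfolding indep_def forb_def
    proof (intro allI impI)
      fix \<sigma> \<sigma>' :: "'a \<Rightarrow> bool" assume "\<forall>x. x \<notin> {v} \<longrightarrow> \<sigma> x = \<sigma>' x"
      then have "\<forall>x\<in>fst ` L. \<sigma> x = \<sigma>' x" using vL by auto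
      then show "(\<forall>(x, b)\<in>L. \<sigma> x \<noteq> b) = (\<forall>(x, b)\<in>L. \<sigma>' x \<noteq> b)" by force
    qed
    moreover have "indep H {v}" using insert.prems(3) l unfolding indep_def by auto
    ultimately show ?thesis unfolding indep_def H'_def by blast
  qed
  have fin: "finite (assignments V)" using assms(1) by (rule finite_assignments)
  have split: "{\<sigma> \<in> assignments V. H' \<sigma>} = {\<sigma> \<in> assignments V. H' \<sigma> \<and> \<sigma> v = b} \<union> {\<sigma> \<in> assignments V. H' \<sigma> \<and> \<sigma> v = (\<not> b)}"
    by auto
  have "card {\<sigma> \<in> assignments V. H' \<sigma>} = card {\<sigma> \<in> assignments V. H' \<sigma> \<and> \<sigma> v = b} + card {\<sigma> \<in> assignments V. H' \<sigma> \<and> \<sigma> v = (\<not> b)}"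
    unfolding split by (rule card_Un_disjoint) (use fin in auto)
  also have "\<dots> = 2 * card {\<sigma> \<in> assignments V. H' \<sigma> \<and> \<sigma> v = (\<not> b)}"
    using flip_card[OF vV indH', of b] by simp
  finally have c2: "card {\<sigma> \<in> assignments V. H' \<sigma>} = 2 * card {\<sigma> \<in> assignments V. H' \<sigma> \<and> \<sigma> v = (\<not> b)}" .
  have IH: "card {\<sigma> \<in> assignments V. H \<sigma> \<and> forb L \<sigma>} * 2 ^ card L = card {\<sigma> \<in> assignments V. H \<sigma>}"
    apply (rule insert.IH)
    using insert.prems by (auto intro: inj_on_subset elim!: indep_mono)
  have "card {\<sigma> \<in> assignments V. H \<sigma> \<and> forb (insert l L) \<sigma>} * 2 ^ card (insert l L)
      = card {\<sigma> \<in> assignments V. H' \<sigma> \<and> \<sigma> v = (\<not> b)} * 2 * 2 ^ card L"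
  proof -
    have "{\<sigma> \<in> assignments V. H \<sigma> \<and> forb (insert l L) \<sigma>} = {\<sigma> \<in> assignments V. H' \<sigma> \<and> \<sigma> v = (\<not> b)}"
      unfolding H'_def forbI by blast
    moreover have "card (insert l L) = Suc (card L)" using insert.hyps by simp
    ultimately show ?thesis by simp
  qed
  also have "\<dots> = card {\<sigma> \<in> assignments V. H' \<sigma>} * 2 ^ card L" using c2 by simp
  also have "\<dots> = card {\<sigma> \<in> assignments V. H \<sigma>}" using IH unfolding H'_def by simp
  finally show ?case .
qed


definition NN :: "'v set \<Rightarrow> (('v \<Rightarrow> bool) \<Rightarrow> bool) \<Rightarrow> real" where
  "NN V P = real (card {\<sigma> \<in> assignments V. P \<sigma>})"

lemma NN_diff:
  assumes "finite V"
  shows "NN V (\<lambda>\<sigma>. P \<sigma> \<and> \<not> Q \<sigma>) = NN V P - NN V (\<lambda>\<sigma>. P \<sigma> \<and> Q \<sigma>)"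
proof -
  have fin: "finite (assignments V)" using assms by (rule finite_assignments)
  have "{\<sigma> \<in> assignments V. P \<sigma>} = {\<sigma> \<in> assignments V. P \<sigma> \<and> \<not> Q \<sigma>} \<union> {\<sigma> \<in> assignments V. P \<sigma> \<and> Q \<sigma>}" by auto
  then have "card {\<sigma> \<in> assignments V. P \<sigma>} = card {\<sigma> \<in> assignments V. P \<sigma> \<and> \<not> Q \<sigma>} + card {\<sigma> \<in> assignments V. P \<sigma> \<and> Q \<sigma>}"
  proof -
    have f1: "finite {\<sigma> \<in> assignments V. P \<sigma> \<and> \<not> Q \<sigma>}" using fin by simp
    have f2: "finite {\<sigma> \<in> assignments V. P \<sigma> \<and> Q \<sigma>}" using fin by simp
    have d: "{\<sigma> \<in> assignments V. P \<sigma> \<and> \<not> Q \<sigma>} \<inter> {\<sigma> \<in> assignments V. P \<sigma> \<and> Q \<sigma>} = {}" by blast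
    show ?thesis unfolding \<open>{\<sigma> \<in> assignments V. P \<sigma>} = _\<close> using card_Un_disjoint[OF f1 f2 d] .
  qed
  then show ?thesis unfolding NN_def by simp
qed

lemma NN_mono:
  assumes "finite V" "\<And>\<sigma>. P \<sigma> \<Longrightarrow> Q \<sigma>"
  shows "NN V P \<le> NN V Q"
proof -
  have fin: "finite (assignments V)" using assms by (simp add: finite_assignments)
  show ?thesis unfolding NN_def using assms(2)
    by (intro of_nat_mono card_mono) (auto intro: finite_subset[OF _ fin])
qed

lemma NN_nonneg: "0 \<le> NN V P" unfolding NN_def by simp

definition GG :: "(('v \<Rightarrow> bool) \<Rightarrow> bool) \<Rightarrow> ('i \<Rightarrow> ('v \<times> bool) set) \<Rightarrow> 'i set \<Rightarrow> ('v \<Rightarrow> bool) \<Rightarrow> bool" where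
  "GG B rl T \<sigma> \<longleftrightarrow> B \<sigma> \<and> (\<forall>t\<in>T. \<not> forb (rl t) \<sigma>)"

lemma chain:
  assumes "finite V" "finite W" "T0 \<inter> W = {}" "0 \<le> x" "x \<le> 1"
    and step: "\<And>S c. S \<subseteq> T0 \<union> W \<Longrightarrow> c \<in> W \<Longrightarrow> c \<notin> S \<Longrightarrow>
        NN V (\<lambda>\<sigma>. GG B rl S \<sigma> \<and> forb (rl c) \<sigma>) \<le> x * NN V (GG B rl S)"
  shows "(1 - x) ^ card W * NN V (GG B rl T0) \<le> NN V (GG B rl (T0 \<union> W))"
  using assms(2,3) step
proof (induction W rule: finite_induct)
  case empty
  then show ?case by simp
next
  case (insert w W)
  have IH: "(1 - x) ^ card W * NN V (GG B rl T0) \<le> NN V (GG B rl (T0 \<union> W))"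
    using insert.prems by (intro insert.IH) auto
  have eq: "GG B rl (T0 \<union> insert w W) = (\<lambda>\<sigma>. GG B rl (T0 \<union> W) \<sigma> \<and> \<not> forb (rl w) \<sigma>)"
    unfolding GG_def by (rule ext) auto
  have st: "NN V (\<lambda>\<sigma>. GG B rl (T0 \<union> W) \<sigma> \<and> forb (rl w) \<sigma>) \<le> x * NN V (GG B rl (T0 \<union> W))"
    using insert.prems insert.hyps by (intro insert.prems(2)) auto
  have "NN V (GG B rl (T0 \<union> insert w W)) = NN V (GG B rl (T0 \<union> W)) - NN V (\<lambda>\<sigma>. GG B rl (T0 \<union> W) \<sigma> \<and> forb (rl w) \<sigma>)"
    unfolding eq by (rule NN_diff[OF assms(1)])
  also have "\<dots> \<ge> (1 - x) * NN V (GG B rl (T0 \<union> W))" using st by (simp add: algebra_simps)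
  finally have A: "(1 - x) * NN V (GG B rl (T0 \<union> W)) \<le> NN V (GG B rl (T0 \<union> insert w W))" .
  have "(1 - x) ^ card (insert w W) * NN V (GG B rl T0) = (1 - x) * ((1 - x) ^ card W * NN V (GG B rl T0))"
    using insert.hyps by simp
  also have "\<dots> \<le> (1 - x) * NN V (GG B rl (T0 \<union> W))"
    using IH assms(5) by (intro mult_left_mono) auto
  finally show ?case using A by linarith
qed

lemma lll:
  fixes rl :: "'i \<Rightarrow> ('v \<times> bool) set"
  assumes finV: "finite V" and finF: "finite F"
    and rlF: "\<And>i. i \<in> F \<Longrightarrow> finite (rl i) \<and> inj_on fst (rl i) \<and> fst ` rl i \<subseteq> V"
    and Bind: "\<And>i. i \<in> F \<Longrightarrow> indep B (fst ` rl i)"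
    and x0: "0 \<le> x" and x1: "x \<le> 1"
    and cond: "\<And>i. i \<in> F \<Longrightarrow> (1/2) ^ card (rl i) \<le> x * (1 - x) ^ card {j \<in> F. j \<noteq> i \<and> fst ` rl j \<inter> fst ` rl i \<noteq> {}}"
  shows "T \<subseteq> F \<Longrightarrow> c \<in> F \<Longrightarrow> c \<notin> T \<Longrightarrow>
      NN V (\<lambda>\<sigma>. GG B rl T \<sigma> \<and> forb (rl c) \<sigma>) \<le> x * NN V (GG B rl T)"
proof (induction "card T" arbitrary: T c rule: less_induct)
  case less
  define T1 where "T1 = {t \<in> T. fst ` rl t \<inter> fst ` rl c \<noteq> {}}"
  define T2 where "T2 = T - T1"
  have finT: "finite T" using less.prems finF finite_subset by blast
  have TT: "T = T2 \<union> T1" "T2 \<inter> T1 = {}" unfolding T1_def T2_def by auto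
  have finT1: "finite T1" using finT unfolding T1_def by simp
  have s1: "NN V (\<lambda>\<sigma>. GG B rl T \<sigma> \<and> forb (rl c) \<sigma>) \<le> NN V (\<lambda>\<sigma>. GG B rl T2 \<sigma> \<and> forb (rl c) \<sigma>)"
    by (rule NN_mono[OF finV]) (auto simp: GG_def T2_def)
  have indG: "indep (GG B rl T2) (fst ` rl c)"
    unfolding indep_def
  proof (intro allI impI)
    fix \<sigma> \<sigma>' :: "'v \<Rightarrow> bool" assume ag: "\<forall>x. x \<notin> fst ` rl c \<longrightarrow> \<sigma> x = \<sigma>' x"
    have "B \<sigma> = B \<sigma>'" using Bind[OF less.prems(2)] ag unfolding indep_def by blast
    moreover have "forb (rl t) \<sigma> = forb (rl t) \<sigma>'" if "t \<in> T2" for t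
    proof -
      have "fst ` rl t \<inter> fst ` rl c = {}" using that unfolding T2_def T1_def by auto
      then have "\<forall>y\<in>fst ` rl t. \<sigma> y = \<sigma>' y" using ag by blast
      then show ?thesis unfolding forb_def by force
    qed
    ultimately show "GG B rl T2 \<sigma> = GG B rl T2 \<sigma>'" unfolding GG_def by auto
  qed
  have s2: "NN V (\<lambda>\<sigma>. GG B rl T2 \<sigma> \<and> forb (rl c) \<sigma>) * 2 ^ card (rl c) = NN V (GG B rl T2)"
  proof -
    have c: "card {\<sigma> \<in> assignments V. GG B rl T2 \<sigma> \<and> forb (rl c) \<sigma>} * 2 ^ card (rl c) = card {\<sigma> \<in> assignments V. GG B rl T2 \<sigma>}"
      using indep_card[OF finV _ _ _ indG] rlF[OF less.prems(2)] by blast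
    have "real (card {\<sigma> \<in> assignments V. GG B rl T2 \<sigma> \<and> forb (rl c) \<sigma>} * 2 ^ card (rl c)) = real (card {\<sigma> \<in> assignments V. GG B rl T2 \<sigma>})"
      using c by (rule arg_cong)
    then show ?thesis unfolding NN_def by simp
  qed
  have s3: "(1 - x) ^ card T1 * NN V (GG B rl T2) \<le> NN V (GG B rl T)"
  proof -
    have "(1 - x) ^ card T1 * NN V (GG B rl T2) \<le> NN V (GG B rl (T2 \<union> T1))"
    proof (rule chain[OF finV finT1 TT(2) x0 x1])
      fix S c' assume a: "S \<subseteq> T2 \<union> T1" "c' \<in> T1" "c' \<notin> S"
      have "S \<subseteq> T - {c'}" using a TT by auto
      moreover have "c' \<in> T" using a TT by auto
      ultimately have "S \<subset> T" by blast
      then have "card S < card T" by (rule psubset_card_mono[OF finT])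
      then show "NN V (\<lambda>\<sigma>. GG B rl S \<sigma> \<and> forb (rl c') \<sigma>) \<le> x * NN V (GG B rl S)"
        using less.hyps[of S c'] a \<open>c' \<in> T\<close> less.prems(1) \<open>S \<subseteq> T - {c'}\<close> by auto
    qed
    then show ?thesis using TT(1) by simp
  qed
  have s4: "(1 - x) ^ card {j \<in> F. j \<noteq> c \<and> fst ` rl j \<inter> fst ` rl c \<noteq> {}} \<le> (1 - x) ^ card T1"
  proof (rule power_decreasing)
    show "card T1 \<le> card {j \<in> F. j \<noteq> c \<and> fst ` rl j \<inter> fst ` rl c \<noteq> {}}"
      using less.prems finF unfolding T1_def by (intro card_mono) auto
  qed (use x0 x1 in auto)
  have p0: "0 \<le> NN V (GG B rl T2)" by (rule NN_nonneg)
  have "NN V (\<lambda>\<sigma>. GG B rl T2 \<sigma> \<and> forb (rl c) \<sigma>) = (1/2) ^ card (rl c) * NN V (GG B rl T2)"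
    using s2 by (simp add: field_simps power_one_over)
  also have "\<dots> \<le> x * (1 - x) ^ card {j \<in> F. j \<noteq> c \<and> fst ` rl j \<inter> fst ` rl c \<noteq> {}} * NN V (GG B rl T2)"
    using cond[OF less.prems(2)] p0 by (rule mult_right_mono)
  also have "\<dots> \<le> x * ((1 - x) ^ card T1 * NN V (GG B rl T2))"
    using s4 p0 x0 by (simp add: mult.assoc mult_left_mono mult_right_mono)
  also have "\<dots> \<le> x * NN V (GG B rl T)"
    using s3 x0 by (rule mult_left_mono)
  finally show ?case using s1 by linarith
qed


lemma clause_inj: "is_clause k c \<Longrightarrow> inj_on fst c"
  unfolding is_clause_def vbl_def by (auto intro: eq_card_imp_inj_on)

lemma lll_apply:
  fixes Cs :: "'v clause set"
  assumes K: "kds_CNF k d s V Cs" and UV: "U \<subseteq> V" and rho: "\<rho> \<in> sat_assignments V Cs"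
    and x0: "0 \<le> x" and x1: "x \<le> 1"
    and cnd: "\<And>i. i \<in> Cs \<Longrightarrow> \<not> vbl i \<subseteq> U \<Longrightarrow> (1/2) ^ (k - card (vbl i \<inter> U)) \<le> x * (1 - x) ^ (k * d)"
  shows "(1 - x) ^ (card U * d) * (1/2) ^ card U * real (card (sat_assignments V Cs))
          \<le> real (card {\<sigma> \<in> sat_assignments V Cs. \<forall>u\<in>U. \<sigma> u = \<rho> u})"
proof -
  have finV: "finite V" and finC: "finite Cs" and cl: "\<And>c. c \<in> Cs \<Longrightarrow> is_clause k c \<and> vbl c \<subseteq> V"
    and deg: "\<And>x. x \<in> V \<Longrightarrow> card {c \<in> Cs. x \<in> vbl c} \<le> d"
    using K unfolding kds_CNF_def by auto
  have finU: "finite U" using UV finV finite_subset by blast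
  have rhoA: "\<rho> \<in> assignments V" and rhoS: "\<And>c. c \<in> Cs \<Longrightarrow> satisfies \<rho> c"
    using rho unfolding sat_assignments_def by auto
  define F where "F = {c \<in> Cs. \<not> vbl c \<subseteq> U \<and> \<not> (\<exists>(y,b)\<in>c. y \<in> U \<and> \<rho> y = b)}"
  define rl where "rl = (\<lambda>c::'v clause. {l \<in> c. fst l \<notin> U})"
  define B where "B = (\<lambda>\<sigma>::'v \<Rightarrow> bool. \<forall>u\<in>U. \<sigma> u = \<rho> u)"
  have FC: "F \<subseteq> Cs" unfolding F_def by auto
  have finF: "finite F" using FC finC finite_subset by blast
  have fstrl: "fst ` rl i = vbl i - U" for i unfolding rl_def vbl_def by auto
  have rlF: "finite (rl i) \<and> inj_on fst (rl i) \<and> fst ` rl i \<subseteq> V" if "i \<in> F" for i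
  proof -
    have "is_clause k i" "vbl i \<subseteq> V" using cl that FC by auto
    then show ?thesis using clause_inj[of k i] unfolding rl_def is_clause_def vbl_def
      by (auto intro: inj_on_subset)
  qed
  have Bind: "indep B (fst ` rl i)" for i
    unfolding indep_def B_def fstrl by auto
  have cntW: "card {j \<in> Cs. vbl j \<inter> W \<noteq> {}} \<le> card W * d" if "W \<subseteq> V" for W
  proof -
    have finW: "finite W" using that finV finite_subset by blast
    have "{j \<in> Cs. vbl j \<inter> W \<noteq> {}} = (\<Union>y\<in>W. {c \<in> Cs. y \<in> vbl c})" by auto
    then have "card {j \<in> Cs. vbl j \<inter> W \<noteq> {}} \<le> (\<Sum>y\<in>W. card {c \<in> Cs. y \<in> vbl c})"
      using card_UN_le[OF finW, of "\<lambda>y. {c \<in> Cs. y \<in> vbl c}"] by simp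
    also have "\<dots> \<le> card W * d"
      using sum_bounded_above[of W "\<lambda>y. card {c \<in> Cs. y \<in> vbl c}" d] deg that by auto
    finally show ?thesis .
  qed
  have cond: "(1/2) ^ card (rl i) \<le> x * (1 - x) ^ card {j \<in> F. j \<noteq> i \<and> fst ` rl j \<inter> fst ` rl i \<noteq> {}}"
    if iF: "i \<in> F" for i
  proof -
    have iC: "i \<in> Cs" and nU: "\<not> vbl i \<subseteq> U" using iF unfolding F_def by auto
    have ic: "is_clause k i" "vbl i \<subseteq> V" using cl iC by auto
    have "card (rl i) = card (fst ` rl i)" using rlF[OF iF] by (simp add: card_image)
    also have "\<dots> = card (vbl i - U)" by (simp add: fstrl)
    also have "\<dots> = card (vbl i) - card (vbl i \<inter> U)"
      using ic unfolding is_clause_def vbl_def by (intro card_Diff_subset_Int) auto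
    also have "\<dots> = k - card (vbl i \<inter> U)" using ic unfolding is_clause_def by simp
    finally have crl: "card (rl i) = k - card (vbl i \<inter> U)" .
    have "card {j \<in> F. j \<noteq> i \<and> fst ` rl j \<inter> fst ` rl i \<noteq> {}} \<le> card {j \<in> Cs. vbl j \<inter> vbl i \<noteq> {}}"
    proof (rule card_mono)
      show "finite {j \<in> Cs. vbl j \<inter> vbl i \<noteq> {}}" using finC by simp
      show "{j \<in> F. j \<noteq> i \<and> fst ` rl j \<inter> fst ` rl i \<noteq> {}} \<subseteq> {j \<in> Cs. vbl j \<inter> vbl i \<noteq> {}}"
        using FC unfolding fstrl by blast
    qed
    also have "\<dots> \<le> card (vbl i) * d" using cntW ic(2) by blast
    also have "\<dots> = k * d" using ic unfolding is_clause_def by simp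
    finally have nb: "card {j \<in> F. j \<noteq> i \<and> fst ` rl j \<inter> fst ` rl i \<noteq> {}} \<le> k * d" .
    have "(1/2) ^ card (rl i) \<le> x * (1 - x) ^ (k * d)" using cnd[OF iC nU] crl by simp
    also have "\<dots> \<le> x * (1 - x) ^ card {j \<in> F. j \<noteq> i \<and> fst ` rl j \<inter> fst ` rl i \<noteq> {}}"
      using nb x0 x1 by (intro mult_left_mono power_decreasing) auto
    finally show ?thesis .
  qed
  note L = lll[OF finV finF rlF Bind x0 x1 cond]
  define F1 where "F1 = {t \<in> F. vbl t \<inter> U = {}}"
  define F2 where "F2 = F - F1"
  have finF2: "finite F2" using finF unfolding F2_def by simp
  have F12: "F1 \<inter> F2 = {}" "F1 \<union> F2 = F" unfolding F2_def F1_def by auto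
  have ch: "(1 - x) ^ card F2 * NN V (GG B rl F1) \<le> NN V (GG B rl (F1 \<union> F2))"
  proof (rule chain[OF finV finF2 F12(1) x0 x1])
    fix S c assume "S \<subseteq> F1 \<union> F2" "c \<in> F2" "c \<notin> S"
    then show "NN V (\<lambda>\<sigma>. GG B rl S \<sigma> \<and> forb (rl c) \<sigma>) \<le> x * NN V (GG B rl S)"
      using L F12 by auto
  qed
  have cF2: "card F2 \<le> card U * d"
  proof -
    have "card F2 \<le> card {j \<in> Cs. vbl j \<inter> U \<noteq> {}}"
      using finC FC unfolding F2_def F1_def by (intro card_mono) auto
    then show ?thesis using cntW[OF UV] by linarith
  qed
  have p1: "(1 - x) ^ (card U * d) \<le> (1 - x) ^ card F2"
    using cF2 x0 x1 by (intro power_decreasing) auto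
  define H where "H = (\<lambda>\<sigma>. \<forall>t\<in>F1. \<not> forb (rl t) \<sigma>)"
  define Lr where "Lr = (\<lambda>u. (u, \<not> \<rho> u)) ` U"
  have fstLr: "fst ` Lr = U" unfolding Lr_def by force
  have injLr: "inj_on fst Lr" unfolding Lr_def inj_on_def by auto
  have cLr: "card Lr = card U" unfolding Lr_def by (rule card_image) (auto simp: inj_on_def)
  have finLr: "finite Lr" using finU unfolding Lr_def by simp
  have indH: "indep H (fst ` Lr)"
    unfolding fstLr indep_def
  proof (intro allI impI)
    fix \<sigma> \<sigma>' :: "'v \<Rightarrow> bool" assume ag: "\<forall>y. y \<notin> U \<longrightarrow> \<sigma> y = \<sigma>' y"
    have "forb (rl t) \<sigma> = forb (rl t) \<sigma>'" for t
    proof -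
      have "\<forall>y\<in>fst ` rl t. \<sigma> y = \<sigma>' y" using ag unfolding fstrl by blast
      then show ?thesis unfolding forb_def by force
    qed
    then show "H \<sigma> = H \<sigma>'" unfolding H_def by simp
  qed
  have GGH: "GG B rl F1 = (\<lambda>\<sigma>. H \<sigma> \<and> forb Lr \<sigma>)"
    unfolding GG_def H_def B_def forb_def Lr_def by (rule ext) auto
  have ic1: "card {\<sigma> \<in> assignments V. H \<sigma> \<and> forb Lr \<sigma>} * 2 ^ card Lr = card {\<sigma> \<in> assignments V. H \<sigma>}"
    by (rule indep_card[OF finV finLr injLr _ indH]) (use fstLr UV in auto)
  have ic2: "NN V (GG B rl F1) * 2 ^ card U = NN V H"
  proof -
    have "real (card {\<sigma> \<in> assignments V. H \<sigma> \<and> forb Lr \<sigma>} * 2 ^ card Lr) = real (card {\<sigma> \<in> assignments V. H \<sigma>})"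
      using ic1 by (rule arg_cong)
    then show ?thesis unfolding NN_def GGH cLr by simp
  qed
  have satH: "real (card (sat_assignments V Cs)) \<le> NN V H"
    unfolding NN_def
  proof (intro of_nat_mono card_mono)
    show "finite {\<sigma> \<in> assignments V. H \<sigma>}" using finite_assignments[OF finV] by simp
    show "sat_assignments V Cs \<subseteq> {\<sigma> \<in> assignments V. H \<sigma>}"
    proof
      fix \<sigma> assume a: "\<sigma> \<in> sat_assignments V Cs"
      have "\<not> forb (rl t) \<sigma>" if "t \<in> F1" for t
      proof -
        have "t \<in> Cs" "vbl t \<inter> U = {}" using that FC unfolding F1_def by auto
        then have "rl t = t" unfolding rl_def vbl_def by auto
        moreover have "satisfies \<sigma> t" using a \<open>t \<in> Cs\<close> unfolding sat_assignments_def by auto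
        ultimately show ?thesis unfolding forb_def satisfies_def by auto
      qed
      then show "\<sigma> \<in> {\<sigma> \<in> assignments V. H \<sigma>}" using a unfolding H_def sat_assignments_def by auto
    qed
  qed
  have fin_end: "NN V (GG B rl F) \<le> real (card {\<sigma> \<in> sat_assignments V Cs. \<forall>u\<in>U. \<sigma> u = \<rho> u})"
    unfolding NN_def
  proof (intro of_nat_mono card_mono)
    show "finite {\<sigma> \<in> sat_assignments V Cs. \<forall>u\<in>U. \<sigma> u = \<rho> u}"
      using finite_assignments[OF finV] unfolding sat_assignments_def by simp
    show "{\<sigma> \<in> assignments V. GG B rl F \<sigma>} \<subseteq> {\<sigma> \<in> sat_assignments V Cs. \<forall>u\<in>U. \<sigma> u = \<rho> u}"
    proof
      fix \<sigma> assume a: "\<sigma> \<in> {\<sigma> \<in> assignments V. GG B rl F \<sigma>}"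
      then have sA: "\<sigma> \<in> assignments V" and sB: "\<forall>u\<in>U. \<sigma> u = \<rho> u" and sF: "\<forall>t\<in>F. \<not> forb (rl t) \<sigma>"
        unfolding GG_def B_def by auto
      have "satisfies \<sigma> c" if cC: "c \<in> Cs" for c
      proof (cases "c \<in> F")
        case True
        then have "\<not> forb (rl c) \<sigma>" using sF by auto
        then show ?thesis unfolding forb_def satisfies_def rl_def by auto
      next
        case False
        then have "vbl c \<subseteq> U \<or> (\<exists>(y,b)\<in>c. y \<in> U \<and> \<rho> y = b)" using cC unfolding F_def by auto
        then show ?thesis
        proof
          assume "vbl c \<subseteq> U"
          moreover obtain y b where "(y,b) \<in> c" "\<rho> y = b" using rhoS[OF cC] unfolding satisfies_def by auto
          ultimately have "y \<in> U" unfolding vbl_def by force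
          then show ?thesis using \<open>(y,b) \<in> c\<close> \<open>\<rho> y = b\<close> sB unfolding satisfies_def by auto
        next
          assume "\<exists>(y,b)\<in>c. y \<in> U \<and> \<rho> y = b"
          then show ?thesis using sB unfolding satisfies_def by auto
        qed
      qed
      then show "\<sigma> \<in> {\<sigma> \<in> sat_assignments V Cs. \<forall>u\<in>U. \<sigma> u = \<rho> u}"
        using sA sB unfolding sat_assignments_def by auto
    qed
  qed
  have hpos: "0 \<le> (1/2::real) ^ card U" by simp
  have "(1 - x) ^ (card U * d) * (1/2) ^ card U * real (card (sat_assignments V Cs))
       \<le> (1 - x) ^ card F2 * ((1/2) ^ card U * NN V H)"
    using p1 satH hpos x1 by (simp add: mult.assoc mult_mono)
  also have "(1/2) ^ card U * NN V H = NN V (GG B rl F1)"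
    using ic2[symmetric] by (simp add: power_one_over)
  also have "(1 - x) ^ card F2 * NN V (GG B rl F1) \<le> NN V (GG B rl F)"
    using ch F12 by simp
  finally show ?thesis using fin_end by linarith
qed


lemma bonf:
  assumes "finite I" "\<And>i. i \<in> I \<Longrightarrow> finite (A i)"
  shows "(\<Sum>i\<in>I. card (A i)) \<le> card (\<Union>i\<in>I. A i) + (\<Sum>i\<in>I. \<Sum>j\<in>I - {i}. card (A i \<inter> A j))"
  using assms
proof (induction I rule: finite_induct)
  case empty
  then show ?case by simp
next
  case (insert i I)
  have IH: "(\<Sum>i\<in>I. card (A i)) \<le> card (\<Union>i\<in>I. A i) + (\<Sum>i\<in>I. \<Sum>j\<in>I - {i}. card (A i \<inter> A j))"
    using insert by auto
  have finA: "finite (A i)" "finite (\<Union>i\<in>I. A i)" using insert by auto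
  have cu: "card (A i) + card (\<Union>i\<in>I. A i) = card (A i \<union> (\<Union>i\<in>I. A i)) + card (A i \<inter> (\<Union>i\<in>I. A i))"
    by (rule card_Un_Int[OF finA])
  have ci: "card (A i \<inter> (\<Union>i\<in>I. A i)) \<le> (\<Sum>j\<in>I. card (A i \<inter> A j))"
  proof -
    have "A i \<inter> (\<Union>i\<in>I. A i) = (\<Union>j\<in>I. A i \<inter> A j)" by auto
    then show ?thesis using card_UN_le[OF insert.hyps(1), of "\<lambda>j. A i \<inter> A j"] by simp
  qed
  have s1: "(\<Sum>i'\<in>insert i I. \<Sum>j\<in>insert i I - {i'}. card (A i' \<inter> A j))
      = (\<Sum>j\<in>insert i I - {i}. card (A i \<inter> A j)) + (\<Sum>i'\<in>I. \<Sum>j\<in>insert i I - {i'}. card (A i' \<inter> A j))"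
    using insert.hyps by simp
  have s2: "insert i I - {i} = I" using insert.hyps by auto
  have s3: "(\<Sum>i'\<in>I. \<Sum>j\<in>I - {i'}. card (A i' \<inter> A j)) \<le> (\<Sum>i'\<in>I. \<Sum>j\<in>insert i I - {i'}. card (A i' \<inter> A j))"
  proof (rule sum_mono)
    fix i' assume "i' \<in> I"
    show "(\<Sum>j\<in>I - {i'}. card (A i' \<inter> A j)) \<le> (\<Sum>j\<in>insert i I - {i'}. card (A i' \<inter> A j))"
      using insert.hyps by (intro sum_mono2) auto
  qed
  have "(\<Sum>i\<in>insert i I. card (A i)) = card (A i) + (\<Sum>i\<in>I. card (A i))" using insert.hyps by simp
  then show ?case using IH cu ci s1 s2 s3 by simp
qed

lemma heavy_bound:
  assumes K: "kds_CNF k d s V Cs" and finS: "finite S" and cS: "card S \<le> k"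
    and big: "k + m * m * s < m * (T + 1)"
  shows "card {h \<in> Cs. T < card (vbl h \<inter> S)} < m"
proof (rule ccontr)
  assume "\<not> ?thesis"
  then have "m \<le> card {h \<in> Cs. T < card (vbl h \<inter> S)}" by simp
  then obtain H where H: "H \<subseteq> {h \<in> Cs. T < card (vbl h \<inter> S)}" "card H = m"
    by (meson obtain_subset_with_card_n)
  have finC: "finite Cs" and pair: "\<And>c1 c2. c1 \<in> Cs \<Longrightarrow> c2 \<in> Cs \<Longrightarrow> c1 \<noteq> c2 \<Longrightarrow> card (vbl c1 \<inter> vbl c2) \<le> s"
    using K unfolding kds_CNF_def by auto
  have "H \<subseteq> Cs" using H(1) by blast
  then have finH: "finite H" using finC by (rule finite_subset)
  have "m * (T + 1) \<le> (\<Sum>h\<in>H. card (vbl h \<inter> S))"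
  proof -
    have "\<And>i. i \<in> H \<Longrightarrow> T + 1 \<le> card (vbl i \<inter> S)" using H(1) by auto
    then have "card H * (T + 1) \<le> (\<Sum>h\<in>H. card (vbl h \<inter> S))"
      using sum_bounded_below[of H "T + 1" "\<lambda>h. card (vbl h \<inter> S)"] by simp
    then show ?thesis using H(2) by simp
  qed
  also have "\<dots> \<le> card (\<Union>h\<in>H. vbl h \<inter> S) + (\<Sum>h\<in>H. \<Sum>j\<in>H - {h}. card ((vbl h \<inter> S) \<inter> (vbl j \<inter> S)))"
    by (rule bonf[OF finH]) (use finS in auto)
  also have "card (\<Union>h\<in>H. vbl h \<inter> S) \<le> k"
  proof -
    have "card (\<Union>h\<in>H. vbl h \<inter> S) \<le> card S" using finS by (intro card_mono) auto
    then show ?thesis using cS by simp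
  qed
  also have "(\<Sum>h\<in>H. \<Sum>j\<in>H - {h}. card ((vbl h \<inter> S) \<inter> (vbl j \<inter> S))) \<le> (\<Sum>h\<in>H. \<Sum>j\<in>H - {h}. s)"
  proof (intro sum_mono)
    fix h j assume "h \<in> H" "j \<in> H - {h}"
    then have "card ((vbl h \<inter> S) \<inter> (vbl j \<inter> S)) \<le> card (vbl h \<inter> vbl j)"
      using K H finS by (intro card_mono) (auto simp: kds_CNF_def is_clause_def vbl_def)
    also have "\<dots> \<le> s" using pair H \<open>h \<in> H\<close> \<open>j \<in> H - {h}\<close> by auto
    finally show "card ((vbl h \<inter> S) \<inter> (vbl j \<inter> S)) \<le> s" .
  qed
  also have "(\<Sum>h\<in>H. \<Sum>j\<in>H - {h}. s) \<le> m * m * s"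
  proof -
    have "(\<Sum>h\<in>H. \<Sum>j\<in>H - {h}. s) \<le> (\<Sum>h\<in>H. m * s)"
    proof (rule sum_mono)
      fix h assume "h \<in> H"
      have "card (H - {h}) \<le> m" using H(2) finH by (metis card_Diff1_le)
      then show "(\<Sum>j\<in>H - {h}. s) \<le> m * s" by simp
    qed
    then show ?thesis using H(2) by simp
  qed
  finally show False using big by linarith
qed


lemma main_bound:
  fixes \<eta> :: real and Cs :: "'v clause set"
  assumes \<eta>0: "0 < \<eta>" and \<eta>1: "\<eta> < 1" and kbig: "real k \<ge> 2 powr (2 / \<eta>)"
    and sk: "real s \<le> real k powr (1 - \<eta>)"
    and kd: "real k \<ge> log 2 (real d) + (6 * real k powr (1 - \<eta>/2) + log 2 (real k)) + 3"
    and K: "kds_CNF k d s V Cs" and c: "is_clause k c" and cV: "vbl c \<subseteq> V"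
    and rho: "\<rho> \<in> sat_assignments V Cs" and hit: "hits_forbidden \<rho> c"
  shows "(1/2) ^ ((k + k * k) * 2 ^ k) * (1/2) ^ (k + k * k) * real (card (sat_assignments V Cs))
         \<le> real (card {\<sigma> \<in> sat_assignments V Cs. hits_forbidden \<sigma> c})"
proof -
  have finV: "finite V" and finC: "finite Cs" and cl: "\<And>c. c \<in> Cs \<Longrightarrow> is_clause k c \<and> vbl c \<subseteq> V"
    using K unfolding kds_CNF_def by auto
  have kpos: "real k > 0" using kbig by (smt (verit) powr_gt_zero)
  then have k1: "real k \<ge> 1" by simp
  define S where "S = vbl c"
  have finS: "finite S" and cS: "card S = k" using c unfolding S_def is_clause_def vbl_def by auto
  define q where "q = real k powr (\<eta>/2)"
  have q1: "q \<ge> 1" unfolding q_def using k1 \<eta>0 by (intro ge_one_powr_ge_zero) auto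
  have qk: "q \<le> real k" unfolding q_def using k1 \<eta>1 powr_mono[of "\<eta>/2" 1 "real k"] by simp
  have qq: "q * q = real k powr \<eta>" unfolding q_def by (simp flip: powr_add)
  have kq: "real k / q = real k powr (1 - \<eta>/2)" unfolding q_def using kpos by (simp add: powr_diff)
  have qs: "real k powr (1 - \<eta>) * q = real k powr (1 - \<eta>/2)" unfolding q_def by (simp flip: powr_add)
  have qqs: "real k powr (1 - \<eta>) * (q * q) = real k" using kpos unfolding qq by (simp flip: powr_add)
  define m where "m = nat \<lceil>q\<rceil>"
  define T where "T = nat \<lceil>5 * real k / q\<rceil>"
  have mq: "q \<le> real m" "real m < q + 1" unfolding m_def using q1 by linarith+
  have Tq: "5 * real k / q \<le> real T" "real T < 5 * real k / q + 1" unfolding T_def using kpos q1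
    by (simp_all add: of_nat_nat) linarith+
  have s0: "0 \<le> real s" by simp
  have big: "k + m * m * s < m * (T + 1)"
  proof -
    have "q * (5 * real k / q) = 5 * real k" using q1 by simp
    moreover have "q * (5 * real k / q) < q * (real T + 1)" using Tq q1 by (intro mult_strict_left_mono) auto
    moreover have "q * (real T + 1) \<le> real m * (real T + 1)" using mq by (intro mult_right_mono) auto
    ultimately have A: "5 * real k < real m * (real T + 1)" by linarith
    have m2: "real m \<le> 2 * q" using mq q1 by linarith
    have "real m * real m * real s \<le> (2 * q) * (2 * q) * real s"
      using m2 s0 by (intro mult_right_mono mult_mono) auto
    also have "\<dots> \<le> (2 * q) * (2 * q) * real k powr (1 - \<eta>)"
      using sk by (intro mult_left_mono) auto
    also have "\<dots> = 4 * real k" using qqs by (simp add: algebra_simps)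
    finally have "real k + real m * real m * real s < real m * (real T + 1)" using A by linarith
    then have "real (k + m * m * s) < real (m * (T + 1))" by (simp add: algebra_simps)
    then show ?thesis by linarith
  qed
  define Hs where "Hs = {h \<in> Cs. T < card (vbl h \<inter> S)}"
  have cH: "card Hs < m" unfolding Hs_def by (rule heavy_bound[OF K finS _ big]) (simp add: cS)
  have finH: "finite Hs" using finC unfolding Hs_def by simp
  have cHq: "real (card Hs) < q" using cH mq by linarith
  have cHk: "card Hs \<le> k" using cHq qk by linarith
  define U where "U = S \<union> (\<Union>h\<in>Hs. vbl h)"
  have UV: "U \<subseteq> V" unfolding U_def S_def Hs_def using cV cl by auto
  have finU: "finite U" using UV finV finite_subset by blast
  have cU: "card U \<le> k + k * k"
  proof -
    have "card U \<le> card S + card (\<Union>h\<in>Hs. vbl h)" unfolding U_def by (rule card_Un_le)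
    also have "card (\<Union>h\<in>Hs. vbl h) \<le> (\<Sum>h\<in>Hs. card (vbl h))" by (rule card_UN_le[OF finH])
    also have "(\<Sum>h\<in>Hs. card (vbl h)) = (\<Sum>h\<in>Hs. k)"
      using cl unfolding Hs_def is_clause_def by (intro sum.cong) auto
    also have "\<dots> = card Hs * k" by simp
    also have "\<dots> \<le> k * k" using cHk by simp
    finally show ?thesis using cS by simp
  qed
  have inter: "card (vbl i \<inter> U) \<le> T + card Hs * s" if iC: "i \<in> Cs" and nU: "\<not> vbl i \<subseteq> U" for i
  proof -
    have iH: "i \<notin> Hs" using nU unfolding U_def by auto
    have finI: "finite (vbl i)" using cl[OF iC] unfolding is_clause_def vbl_def by auto
    have "vbl i \<inter> U = (vbl i \<inter> S) \<union> (\<Union>h\<in>Hs. vbl i \<inter> vbl h)" unfolding U_def by auto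
    then have "card (vbl i \<inter> U) \<le> card (vbl i \<inter> S) + card (\<Union>h\<in>Hs. vbl i \<inter> vbl h)"
      by (simp add: card_Un_le)
    also have "card (\<Union>h\<in>Hs. vbl i \<inter> vbl h) \<le> (\<Sum>h\<in>Hs. card (vbl i \<inter> vbl h))" by (rule card_UN_le[OF finH])
    also have "(\<Sum>h\<in>Hs. card (vbl i \<inter> vbl h)) \<le> (\<Sum>h\<in>Hs. s)"
    proof (rule sum_mono)
      fix h assume "h \<in> Hs"
      then have "h \<in> Cs" "h \<noteq> i" using iH unfolding Hs_def by auto
      then show "card (vbl i \<inter> vbl h) \<le> s" using K iC unfolding kds_CNF_def by auto
    qed
    also have "card (vbl i \<inter> S) \<le> T" using iH iC unfolding Hs_def by auto
    finally show ?thesis by simp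
  qed
  define r where "r = real k - 6 * real k powr (1 - \<eta>/2) - 1"
  have TH: "real T + real (card Hs) * real s \<le> 6 * real k powr (1 - \<eta>/2) + 1"
  proof -
    have "real (card Hs) * real s \<le> q * real k powr (1 - \<eta>)"
      using cHq sk s0 by (intro mult_mono) auto
    then have "real (card Hs) * real s \<le> real k powr (1 - \<eta>/2)" using qs by (simp add: mult.commute)
    moreover have "real T \<le> 5 * real k powr (1 - \<eta>/2) + 1" using Tq kq by simp
    ultimately show ?thesis by linarith
  qed
  have logd0: "log 2 (real d) \<ge> 0" by (cases "d = 0") (auto simp: log_def)
  have logk0: "log 2 (real k) \<ge> 0" using k1 by simp
  have pw0: "real k powr (1 - \<eta>/2) \<ge> 0" by simp
  have r2: "r \<ge> 2 + log 2 (real k) + log 2 (real d)" unfolding r_def using kd by linarith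
  then have r2': "r \<ge> 2" using logd0 logk0 by linarith
  have kdr: "4 * (real k * real d) \<le> 2 powr r"
  proof (cases "d = 0")
    case True
    then show ?thesis by simp
  next
    case False
    then have "4 * (real k * real d) = 2 powr (2 + log 2 (real k) + log 2 (real d))"
      using kpos by (simp add: powr_add)
    also have "\<dots> \<le> 2 powr r" using r2 by simp
    finally show ?thesis .
  qed
  have d2k: "d \<le> 2 ^ k"
  proof (cases "d = 0")
    case True then show ?thesis by simp
  next
    case False
    have "log 2 (real d) \<le> real k" using kd logk0 pw0 by linarith
    then have "real d \<le> 2 powr real k" using False by (simp add: log_le_iff)
    then have "real d \<le> real (2 ^ k)" by (simp add: powr_realpow)
    then show ?thesis by linarith
  qed
  define x where "x = 2 powr (1 - r)"
  have x0: "0 \<le> x" unfolding x_def by simp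
  have xh: "x \<le> 1/2"
  proof -
    have "x \<le> 2 powr (-1)" unfolding x_def using r2' by (intro powr_mono) auto
    then show ?thesis by (simp add: powr_minus)
  qed
  have x2: "x = 2 * 2 powr (- r)" unfolding x_def by (simp add: powr_diff powr_minus divide_inverse)
  have cnd: "(1/2) ^ (k - card (vbl i \<inter> U)) \<le> x * (1 - x) ^ (k * d)" if iC: "i \<in> Cs" and nU: "\<not> vbl i \<subseteq> U" for i
  proof -
    have ck: "card (vbl i \<inter> U) \<le> k"
    proof -
      have "finite (vbl i)" using cl[OF iC] unfolding is_clause_def vbl_def by auto
      then have "card (vbl i \<inter> U) \<le> card (vbl i)" by (intro card_mono) auto
      then show ?thesis using cl[OF iC] unfolding is_clause_def by simp
    qed
    have "real (card (vbl i \<inter> U)) \<le> real (T + card Hs * s)"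
      using inter[OF iC nU] by (rule of_nat_mono)
    then have "real (card (vbl i \<inter> U)) \<le> 6 * real k powr (1 - \<eta>/2) + 1" using TH
      unfolding of_nat_add of_nat_mult by linarith
    moreover have "real (k - card (vbl i \<inter> U)) = real k - real (card (vbl i \<inter> U))" using ck by (rule of_nat_diff)
    ultimately have rn: "r \<le> real (k - card (vbl i \<inter> U))" unfolding r_def by linarith
    have "(1/2::real) ^ (k - card (vbl i \<inter> U)) = 2 powr (- real (k - card (vbl i \<inter> U)))"
      by (simp add: powr_minus powr_realpow power_one_over inverse_eq_divide)
    also have "\<dots> \<le> 2 powr (- r)" using rn by simp
    also have "\<dots> = x / 2" using x2 by simp
    finally have A: "(1/2::real) ^ (k - card (vbl i \<inter> U)) \<le> x / 2" .
    have bern: "1 + real (k * d) * (- x) \<le> (1 + (- x)) ^ (k * d)" using xh by (intro Bernoulli_inequality) auto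
    have e1: "1 + (- x) = 1 - x" by simp
    have e2: "1 + real (k * d) * (- x) = 1 - real (k * d) * x" by simp
    have bern2: "1 - real (k * d) * x \<le> (1 - x) ^ (k * d)" using bern unfolding e1 e2 .
    moreover have "real (k * d) * x \<le> 1/2"
    proof -
      have "real (k * d) * x = 2 * (real k * real d) * 2 powr (- r)" using x2 by simp
      also have "\<dots> = 2 * (real k * real d) / 2 powr r" by (simp add: powr_minus divide_inverse)
      also have "\<dots> \<le> 1/2" using kdr by (simp add: divide_le_eq)
      finally show ?thesis .
    qed
    then have B: "1/2 \<le> (1 - x) ^ (k * d)" using bern2 by linarith
    have "x * (1/2) \<le> x * (1 - x) ^ (k * d)" using B x0 by (rule mult_left_mono)
    then have "x / 2 \<le> x * (1 - x) ^ (k * d)" by simp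
    then show ?thesis using A by linarith
  qed
  have LA: "(1 - x) ^ (card U * d) * (1/2) ^ card U * real (card (sat_assignments V Cs))
          \<le> real (card {\<sigma> \<in> sat_assignments V Cs. \<forall>u\<in>U. \<sigma> u = \<rho> u})"
    by (rule lll_apply[OF K UV rho x0 _ cnd]) (use xh in auto)
  have sub: "card {\<sigma> \<in> sat_assignments V Cs. \<forall>u\<in>U. \<sigma> u = \<rho> u} \<le> card {\<sigma> \<in> sat_assignments V Cs. hits_forbidden \<sigma> c}"
  proof (rule card_mono)
    show "finite {\<sigma> \<in> sat_assignments V Cs. hits_forbidden \<sigma> c}"
      using finite_assignments[OF finV] unfolding sat_assignments_def by simp
    show "{\<sigma> \<in> sat_assignments V Cs. \<forall>u\<in>U. \<sigma> u = \<rho> u} \<subseteq> {\<sigma> \<in> sat_assignments V Cs. hits_forbidden \<sigma> c}"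
    proof safe
      fix \<sigma> assume "\<sigma> \<in> sat_assignments V Cs" "\<forall>u\<in>U. \<sigma> u = \<rho> u"
      moreover have "\<And>y b. (y, b) \<in> c \<Longrightarrow> y \<in> U" unfolding U_def S_def vbl_def by force
      ultimately show "hits_forbidden \<sigma> c" using hit unfolding hits_forbidden_def by fastforce
    qed
  qed
  have P1: "(1/2::real) ^ ((k + k * k) * 2 ^ k) \<le> (1 - x) ^ (card U * d)"
  proof -
    have "card U * d \<le> (k + k * k) * 2 ^ k" using cU d2k by (intro mult_mono) auto
    then have "(1/2::real) ^ ((k + k * k) * 2 ^ k) \<le> (1/2) ^ (card U * d)" by (intro power_decreasing) auto
    also have "\<dots> \<le> (1 - x) ^ (card U * d)" using xh by (intro power_mono) auto
    finally show ?thesis .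
  qed
  have P2: "(1/2::real) ^ (k + k * k) \<le> (1/2) ^ card U" using cU by (intro power_decreasing) auto
  have "(1/2) ^ ((k + k * k) * 2 ^ k) * (1/2) ^ (k + k * k) * real (card (sat_assignments V Cs))
        \<le> (1 - x) ^ (card U * d) * (1/2) ^ card U * real (card (sat_assignments V Cs))"
    using P1 P2 xh by (intro mult_right_mono mult_mono) auto
  also have "\<dots> \<le> real (card {\<sigma> \<in> sat_assignments V Cs. hits_forbidden \<sigma> c})" using LA sub by linarith
  finally show ?thesis .
qed


theorem lemma3p1:
  fixes \<eta> :: real
  assumes "0 < \<eta>" and "\<eta> < 1"
  shows "\<exists>f :: nat \<Rightarrow> real. f \<in> o(\<lambda>k. real k) \<and>
           (\<exists>C0 :: real. \<exists>\<theta> :: nat \<Rightarrow> real. (\<forall>k. \<theta> k > 0) \<and>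
             (\<forall>k d s (V :: 'v set) Cs.
                real k \<ge> 2 powr (2 / \<eta>) \<and>
                real s \<le> real k powr (1 - \<eta>) \<and>
                real k \<ge> log 2 (real d) + f k + C0 \<and>
                kds_CNF k d s V Cs
                \<longrightarrow> resilient (\<theta> k) k V Cs))"
proof -
  define f where "f = (\<lambda>k::nat. 6 * real k powr (1 - \<eta>/2) + log 2 (real k))"
  define \<theta> where "\<theta> = (\<lambda>k::nat. (1/2::real) ^ ((k + k * k) * 2 ^ k) * (1/2) ^ (k + k * k))"
  have fo: "f \<in> o(\<lambda>k. real k)" unfolding f_def using assms by real_asymp
  have tpos: "\<forall>k. \<theta> k > 0" unfolding \<theta>_def by simp
  have res: "resilient (\<theta> k) k V Cs"
    if h: "real k \<ge> 2 powr (2 / \<eta>)" "real s \<le> real k powr (1 - \<eta>)"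
      "real k \<ge> log 2 (real d) + f k + 3" "kds_CNF k d s V Cs"
    for k d s and V :: "'v set" and Cs
    unfolding resilient_def
  proof (intro allI impI)
    fix c :: "'v clause" assume c: "is_clause k c \<and> vbl c \<subseteq> V \<and> c \<notin> Cs"
    have finV: "finite V" using h(4) unfolding kds_CNF_def by auto
    have finS: "finite (sat_assignments V Cs)"
      using finite_assignments[OF finV] unfolding sat_assignments_def by simp
    show "prob_forbidden V Cs c = 0 \<or> \<theta> k \<le> prob_forbidden V Cs c"
    proof (cases "{\<sigma> \<in> sat_assignments V Cs. hits_forbidden \<sigma> c} = {}")
      case True
      then have "card {\<sigma> \<in> sat_assignments V Cs. hits_forbidden \<sigma> c} = 0" by (simp only: card.empty)
      then show ?thesis unfolding prob_forbidden_def by simp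
    next
      case False
      then obtain \<rho> where rho: "\<rho> \<in> sat_assignments V Cs" "hits_forbidden \<rho> c" by blast
      have mb: "\<theta> k * real (card (sat_assignments V Cs)) \<le> real (card {\<sigma> \<in> sat_assignments V Cs. hits_forbidden \<sigma> c})"
        unfolding \<theta>_def
        by (rule main_bound[OF assms h(1,2) _ h(4) _ _ rho]) (use h(3) c in \<open>auto simp: f_def\<close>)
      have cpos: "0 < real (card (sat_assignments V Cs))" using rho finS card_gt_0_iff by fastforce
      then have "\<theta> k \<le> prob_forbidden V Cs c"
        unfolding prob_forbidden_def using mb by (simp add: pos_le_divide_eq)
      then show ?thesis by simp
    qed
  qed
  show ?thesis
    apply (rule exI[of _ f])
    apply (rule conjI[OF fo])
    apply (rule exI[of _ 3])
    apply (rule exI[of _ \<theta>])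
    apply (rule conjI[OF tpos])
    apply (intro allI impI)
    apply (elim conjE)
    apply (rule res)
       apply assumption+
    done
qed

end
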